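(* Let $\mathcal{X}\subseteq\mathbb{R}^d$ be an open convex domain, $p\in\mathcal{X}$ a site, $f_p:\mathcal{X}\to\mathbb{R}^+$ a $\tau$-admissible distance function, and $B\subset\mathcal{X}$ a Euclidean ball. If $B$ and $p$ are $(\tau\kappa)$-separated for some $\kappa>1$, then (i) $f_p^+(B)\le f_p^-(B)\,\kappa/(\kappa-1)$; (ii) $\|\nabla f_p^+(B)\|\le f_p^+(B)/(\kappa\cdot\mathrm{diam}(B))$; (iii) $\|\nabla^2 f_p^+(B)\|\le f_p^+(B)/(\kappa\cdot\mathrm{diam}(B))^2$.
   Context: $f_p$ has a well-defined gradient and Hessian on $\mathcal{X}$ (at least on $B$). $f_p$ is $\tau$-admissible if for all $x\in\mathcal{X}$: $\|\nabla f_p(x)\|\,\|x-p\|\le\tau f_p(x)$ and $\|\nabla^2 f_p(x)\|\,\|x-p\|^2\le\tau^2 f_p(x)$ (Euclidean norm, spectral norm for matrices). $B$ and $p$ are $\beta$-separated if $\mathrm{dist}(p,B)/\mathrm{diam}(B)\ge\beta$, with $\mathrm{dist}$ the minimum Euclidean distance. $f^+(B)$, $f^-(B)$ denote the maximum and minimum of $f$ on $B$; $\|\nabla f^+(B)\|$ and $\|\nabla^2 f^+(B)\|$ denote the maxima over $x\in B$ of $\|\nabla f(x)\|$ and $\|\nabla^2 f(x)\|$. *)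

theory Defs
  imports "HOL-Analysis.Analysis"
begin

text \<open>Gradient and Hessian of f on X are given as functions grad and hess, characterised
  by the derivative relations below (they are then uniquely determined).
  The spectral norm of the (symmetric) Hessian is its operator norm onorm.\<close>

definition has_grad_hess_on ::
  "('a::euclidean_space \<Rightarrow> real) \<Rightarrow> ('a \<Rightarrow> 'a) \<Rightarrow> ('a \<Rightarrow> 'a \<Rightarrow> 'a) \<Rightarrow> 'a set \<Rightarrow> bool" where
  "has_grad_hess_on f grad hess X \<longleftrightarrow>
     (\<forall>x\<in>X. (f has_derivative (\<lambda>h. grad x \<bullet> h)) (at x) \<and>
             (grad has_derivative hess x) (at x))"

definition tau_admissible ::
  "real \<Rightarrow> ('a::euclidean_space \<Rightarrow> real) \<Rightarrow> ('a \<Rightarrow> 'a) \<Rightarrow> ('a \<Rightarrow> 'a \<Rightarrow> 'a) \<Rightarrow> 'a \<Rightarrow> 'a set \<Rightarrow> bool" where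
  "tau_admissible \<tau> f grad hess p X \<longleftrightarrow>
     (\<forall>x\<in>X. norm (grad x) * norm (x - p) \<le> \<tau> * f x \<and>
             onorm (hess x) * norm (x - p)^2 \<le> \<tau>^2 * f x)"

definition separated :: "real \<Rightarrow> 'a::euclidean_space set \<Rightarrow> 'a \<Rightarrow> bool" where
  "separated \<beta> B p \<longleftrightarrow> infdist p B / diameter B \<ge> \<beta>"

end

theory Submission
  imports Defs
begin

theorem lemma2:
  fixes X :: "'a::euclidean_space set" and p c :: 'a and r \<tau> \<kappa> :: real
    and f :: "'a \<Rightarrow> real" and grad :: "'a \<Rightarrow> 'a" and hess :: "'a \<Rightarrow> 'a \<Rightarrow> 'a"
  assumes "open X" and "convex X" and "p \<in> X"
    and "\<forall>x\<in>X. f x > 0"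
    and "has_grad_hess_on f grad hess X"
    and "tau_admissible \<tau> f grad hess p X"
    and "r > 0" and "cball c r \<subseteq> X"
    and "\<kappa> > 1" and "separated (\<tau> * \<kappa>) (cball c r) p"
  shows "Sup (f ` cball c r) \<le> Inf (f ` cball c r) * \<kappa> / (\<kappa> - 1) \<and>
         Sup ((\<lambda>x. norm (grad x)) ` cball c r)
           \<le> Sup (f ` cball c r) / (\<kappa> * diameter (cball c r)) \<and>
         Sup ((\<lambda>x. onorm (hess x)) ` cball c r)
           \<le> Sup (f ` cball c r) / (\<kappa> * diameter (cball c r))^2"
proof -
  define B where "B = cball c r"
  define S where "S = Sup (f ` B)"
  define D where "D = diameter B"
  have D: "D = 2 * r" using assms(7) by (simp add: D_def B_def)
  have fder: "\<And>x. x \<in> X \<Longrightarrow> (f has_derivative (\<lambda>h. grad x \<bullet> h)) (at x)"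
   and gder: "\<And>x. x \<in> X \<Longrightarrow> (grad has_derivative hess x) (at x)"
    using assms(5) by (auto simp: has_grad_hess_on_def)
  have adm1: "\<And>x. x \<in> X \<Longrightarrow> norm (grad x) * norm (x - p) \<le> \<tau> * f x"
   and adm2: "\<And>x. x \<in> X \<Longrightarrow> onorm (hess x) * norm (x - p)^2 \<le> \<tau>^2 * f x"
    using assms(6) by (auto simp: tau_admissible_def)
  have BX: "B \<subseteq> X" using assms(8) by (simp add: B_def)
  have contf: "continuous_on B f"
    using fder BX by (meson continuous_on_eq_continuous_at has_derivative_continuous
        assms(1) continuous_on_subset) 
  have cptB: "compact B" by (simp add: B_def)
  have bdd: "bounded (f ` B)" using compact_continuous_image[OF contf cptB] compact_imp_bounded by blast
  have bddA: "bdd_above (f ` B)" and bddB: "bdd_below (f ` B)"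
    using bdd bounded_imp_bdd_above bounded_imp_bdd_below by auto
  have cB: "c \<in> B" using assms(7) by (simp add: B_def)
  have fle: "\<And>x. x \<in> B \<Longrightarrow> f x \<le> S" unfolding S_def using bddA by (intro cSup_upper) auto
  have fpos: "\<And>x. x \<in> B \<Longrightarrow> f x > 0" using assms(4) BX by auto
  have S0: "S > 0" using fle[OF cB] fpos[OF cB] by linarith
  have tau0: "\<tau> \<ge> 0"
  proof -
    have "0 \<le> norm (grad p) * norm (p - p)" by simp
    also have "\<dots> \<le> \<tau> * f p" using adm1[OF assms(3)] .
    finally have "0 \<le> \<tau> * f p" .
    moreover have "f p > 0" using assms(4) assms(3) by auto
    ultimately show ?thesis by (simp add: zero_le_mult_iff)
  qed
  have kD: "\<kappa> * D > 0" using assms(9) assms(7) D by simp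
  have G: "\<forall>x\<in>B. norm (grad x) \<le> S / (\<kappa> * D) \<and> onorm (hess x) \<le> S / (\<kappa> * D)^2"
  proof (cases "\<tau> = 0")
    case True
    have g0: "grad x = 0" if "x \<in> X" "x \<noteq> p" for x
      using adm1[OF that(1)] that(2) True by (simp add: mult_le_0_iff)
    have h0: "onorm (hess x) \<le> 0" if "x \<in> X" "x \<noteq> p" for x
      using adm2[OF that(1)] that(2) True by (simp add: mult_le_0_iff)
    obtain e where e: "e > 0" "ball p e \<subseteq> X" using assms(1,3) openE by blast
    have gp: "grad p = 0"
    proof -
      have "isCont grad p" using gder[OF assms(3)] has_derivative_continuous by blast
      hence "(grad \<longlongrightarrow> grad p) (at p)" by (simp add: isCont_def)
      moreover have "((\<lambda>_. 0) \<longlongrightarrow> grad p) (at p)"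
      proof (rule Lim_transform_within[OF calculation e(1)])
        fix x assume "0 < dist x p" "dist x p < e"
        thus "grad x = 0" using g0 e(2) by (simp add: dist_commute subset_iff)
      qed
      ultimately show ?thesis using tendsto_unique[OF at_neq_bot] tendsto_const
        by (metis at_neq_bot tendsto_unique)
    qed
    have hp: "onorm (hess p) \<le> 0"
    proof -
      have "((\<lambda>_. 0) has_derivative hess p) (at p)"
      proof (rule has_derivative_transform_within_open[OF gder[OF assms(3)] open_ball])
        show "p \<in> ball p e" using e by simp
        fix x assume "x \<in> ball p e"
        thus "grad x = 0" using g0 gp e(2) by (cases "x = p") auto
      qed
      hence "hess p = (\<lambda>_. 0)" using has_derivative_unique has_derivative_const by blast
      thus ?thesis by (simp add: onorm_zero)
    qed
    have "S / (\<kappa> * D) \<ge> 0" "S / (\<kappa> * D)^2 \<ge> 0" using S0 kD by auto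
    then show ?thesis using g0 h0 gp hp BX by (metis norm_zero order.trans subsetD)
  next
    case False
    hence tp: "\<tau> > 0" using tau0 by simp
    have sep: "infdist p B \<ge> \<tau> * \<kappa> * D"
      using assms(10) D assms(7) unfolding separated_def B_def[symmetric] D_def[symmetric]
      by (simp add: pos_le_divide_eq)
    have id0: "\<tau> * \<kappa> * D > 0" using tp kD by (simp add: mult.assoc)
    show ?thesis
    proof
      fix x assume xB: "x \<in> B"
      have dx: "norm (x - p) \<ge> \<tau> * \<kappa> * D"
        using infdist_le[OF xB, of p] sep by (simp add: dist_norm norm_minus_commute)
      have np: "norm (x - p) > 0" using dx id0 by linarith
      have xX: "x \<in> X" using xB BX by auto
      have "norm (grad x) \<le> \<tau> * f x / norm (x - p)"
        using adm1[OF xX] np by (simp add: pos_le_divide_eq)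
      also have "\<dots> \<le> \<tau> * S / (\<tau> * \<kappa> * D)"
        using fle[OF xB] tp np dx id0 fpos[OF xB]
        by (intro frac_le mult_left_mono) auto
      also have "\<dots> = S / (\<kappa> * D)" using tp by (simp add: mult.assoc)
      finally have g: "norm (grad x) \<le> S / (\<kappa> * D)" .
      have "onorm (hess x) \<le> \<tau>^2 * f x / norm (x - p)^2"
        using adm2[OF xX] np by (simp add: pos_le_divide_eq)
      also have "\<dots> \<le> \<tau>^2 * S / (\<tau> * \<kappa> * D)^2"
        using fle[OF xB] tp np dx id0 fpos[OF xB]
        by (intro frac_le mult_left_mono power_mono) auto
      also have "\<dots> = S / (\<kappa> * D)^2" using tp by (simp add: power_mult_distrib mult.assoc)
      finally show "norm (grad x) \<le> S / (\<kappa> * D) \<and> onorm (hess x) \<le> S / (\<kappa> * D)^2"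
        using g by simp
    qed
  qed
  have Bne: "B \<noteq> {}" using cB by auto
  have P2: "Sup ((\<lambda>x. norm (grad x)) ` B) \<le> S / (\<kappa> * D)"
    using G Bne by (intro cSup_least) auto
  have P3: "Sup ((\<lambda>x. onorm (hess x)) ` B) \<le> S / (\<kappa> * D)^2"
    using G Bne by (intro cSup_least) auto
  have mvt: "f x \<le> f y + S / \<kappa>" if "x \<in> B" "y \<in> B" for x y
  proof -
    have "norm (f x - f y) \<le> S / (\<kappa> * D) * norm (x - y)"
    proof (rule differentiable_bound[of B f "\<lambda>x h. grad x \<bullet> h"])
      show "convex B" by (simp add: B_def)
      show "(f has_derivative (\<lambda>h. grad z \<bullet> h)) (at z within B)" if "z \<in> B" for z
        using fder[of z] that BX has_derivative_at_withinI by blast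
      show "onorm (\<lambda>h. grad z \<bullet> h) \<le> S / (\<kappa> * D)" if "z \<in> B" for z
      proof -
        have "onorm (\<lambda>h. grad z \<bullet> h) \<le> norm (grad z)"
          by (rule onorm_bound) (auto simp: Cauchy_Schwarz_ineq2)
        thus ?thesis using G that by (meson order.trans)
      qed
    qed (use that in auto)
    moreover have "norm (x - y) \<le> D"
      using that unfolding D_def B_def
      by (metis bounded_cball diameter_bounded_bound dist_norm)
    moreover have "S / (\<kappa> * D) \<ge> 0" using S0 kD by simp
    ultimately have "norm (f x - f y) \<le> S / (\<kappa> * D) * D"
      by (meson mult_left_mono order.trans)
    also have "\<dots> = S / \<kappa>" using kD D assms(7) by (simp add: field_simps)
    finally show ?thesis by simp
  qed
  have "S - S / \<kappa> \<le> Inf (f ` B)"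
  proof (rule cInf_greatest)
    show "f ` B \<noteq> {}" using Bne by simp
    fix v assume "v \<in> f ` B"
    then obtain y where y: "y \<in> B" "v = f y" by auto
    have "Sup (f ` B) \<le> f y + S / \<kappa>"
      using Bne mvt y(1) by (intro cSup_least) auto
    hence "S \<le> f y + S / \<kappa>" by (simp only: S_def)
    thus "S - S / \<kappa> \<le> v" using y by simp
  qed
  hence P1: "S \<le> Inf (f ` B) * \<kappa> / (\<kappa> - 1)"
    using assms(9) by (simp add: field_simps)
  show ?thesis using P1 P2 P3 unfolding S_def D_def B_def by simp
qed

end
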